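(* Let $N\ge1$ and let $\{x_j\}_{j=0}^N$ be the Legendre–Gauss–Radau points (the zeros of $P_N(x)+P_{N+1}(x)$, with $x_0=-1$), with weights $\omega_j=\frac{1}{(N+1)^2}\frac{1-x_j}{P_N^2(x_j)}$. Let $B_0,\dots,B_N\in\mathbb{P}_N$ be defined by $B_0(-1)=1$, $B_0'(x_i)=0$ ($1\le i\le N$), and $B_j(-1)=0$, $B_j'(x_i)=\delta_{ij}$ ($1\le i,j\le N$). Then $B_0(x)=1$ and $$B_j(x)=\sum_{k=0}^{N-1}\alpha_{kj}\frac{\partial_x^{-1}P_k(x)}{\gamma_k},\qquad \alpha_{kj}=\big(P_k(x_j)-(-1)^{N+k}P_N(x_j)\big)\omega_j,\quad 1\le j\le N,$$ where $\gamma_k=\frac{2}{2k+1}$.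
   Context: $P_k$ is the Legendre polynomial of degree $k$; $\partial_x^{-1}u(x)=\int_{-1}^xu(t)\,dt$. $\mathbb{P}_N$ is the space of polynomials of degree at most $N$. *)

theory Defs
  imports "HOL-Analysis.Analysis" "HOL-Computational_Algebra.Polynomial"
begin

fun legendre :: "nat \<Rightarrow> real poly" where
  "legendre 0 = 1"
| "legendre (Suc 0) = [:0, 1:]"
| "legendre (Suc (Suc n)) =
     smult (1 / real (n + 2))
       (smult (real (2 * n + 3)) ([:0, 1:] * legendre (Suc n)) - smult (real (n + 1)) (legendre n))"

definition antideriv :: "(real \<Rightarrow> real) \<Rightarrow> real \<Rightarrow> real" where
  "antideriv u t = integral {-1..t} u"

definition lgr_gamma :: "nat \<Rightarrow> real" where
  "lgr_gamma k = 2 / (2 * real k + 1)"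

definition lgr_weight :: "nat \<Rightarrow> real \<Rightarrow> real" where
  "lgr_weight N t = (1 / (real N + 1)^2) * (1 - t) / (poly (legendre N) t)^2"

end

theory Submission
  imports Defs
begin

abbreviation L :: "nat \<Rightarrow> real \<Rightarrow> real" where "L n t \<equiv> poly (legendre n) t"
abbreviation L' :: "nat \<Rightarrow> real \<Rightarrow> real" where "L' n t \<equiv> poly (pderiv (legendre n)) t"

lemma leg_rec: "real (n+2) * L (Suc (Suc n)) t = real (2*n+3) * t * L (Suc n) t - real (n+1) * L n t"
  by (simp add: field_simps)

lemma leg_rec_d: "real (n+2) * L' (Suc (Suc n)) t = real (2*n+3) * L (Suc n) t + real (2*n+3) * t * L' (Suc n) t - real (n+1) * L' n t"
  by (simp add: pderiv_smult pderiv_diff pderiv_mult pderiv_pCons field_simps)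

lemma leg_deriv: "L' (Suc n) t = t * L' n t + real (Suc n) * L n t \<and> t * L' (Suc n) t - L' n t = real (Suc n) * L (Suc n) t"
proof (induction n)
  case 0
  then show ?case by (simp add: pderiv_pCons)
next
  case (Suc n)
  have A: "L' (Suc n) t = t * L' n t + real (Suc n) * L n t" and B: "t * L' (Suc n) t - L' n t = real (Suc n) * L (Suc n) t"
    using Suc by auto
  have R: "real (n+2) * L (Suc (Suc n)) t = real (2*n+3) * t * L (Suc n) t - real (n+1) * L n t" by (rule leg_rec)
  have R': "real (n+2) * L' (Suc (Suc n)) t = real (2*n+3) * L (Suc n) t + real (2*n+3) * t * L' (Suc n) t - real (n+1) * L' n t" by (rule leg_rec_d)
  have pos: "real (n+2) \<noteq> 0" by simp
  have G1: "real (n+2) * L' (Suc (Suc n)) t = real (n+2) * (t * L' (Suc n) t + real (Suc (Suc n)) * L (Suc n) t)"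
  proof -
    have B': "L' n t = t * L' (Suc n) t - real (Suc n) * L (Suc n) t" using B by simp
    show ?thesis unfolding R' B' by (simp add: algebra_simps)
  qed
  have H: "(1 - t^2) * L' (Suc n) t = real (Suc n) * (L n t - t * L (Suc n) t)"
  proof -
    have B': "L' n t = t * L' (Suc n) t - real (Suc n) * L (Suc n) t" using B by simp
    have "L' (Suc n) t = t * (t * L' (Suc n) t - real (Suc n) * L (Suc n) t) + real (Suc n) * L n t"
      using A unfolding B' .
    then show ?thesis by (simp add: algebra_simps power2_eq_square)
  qed
  have G2: "real (n+2) * (t * L' (Suc (Suc n)) t - L' (Suc n) t) = real (n+2) * (real (Suc (Suc n)) * L (Suc (Suc n)) t)"
  proof -
    have "real (n+2) * (t * L' (Suc (Suc n)) t - L' (Suc n) t) = t * (real (n+2) * L' (Suc (Suc n)) t) - real (n+2) * L' (Suc n) t"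
      by (simp add: algebra_simps)
    also have "\<dots> = t * (real (n+2) * (t * L' (Suc n) t + real (Suc (Suc n)) * L (Suc n) t)) - real (n+2) * L' (Suc n) t"
      using G1 by simp
    also have "\<dots> = - (real n + 2) * ((1 - t^2) * L' (Suc n) t) + (real n + 2) * (real n + 2) * t * L (Suc n) t"
      by (simp add: algebra_simps power2_eq_square)
    also have "\<dots> = - (real n + 2) * (real (Suc n) * (L n t - t * L (Suc n) t)) + (real n + 2) * (real n + 2) * t * L (Suc n) t"
      using H by simp
    also have "\<dots> = real (n+2) * (real (2*n+3) * t * L (Suc n) t - real (n+1) * L n t)"
      by (simp add: algebra_simps)
    also have "\<dots> = real (n+2) * (real (Suc (Suc n)) * L (Suc (Suc n)) t)"
      using R by simp
    finally show ?thesis .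
  qed
  show ?case using G1 G2 pos by (metis mult_left_cancel)
qed

definition KK :: "nat \<Rightarrow> real \<Rightarrow> real \<Rightarrow> real" where
  "KK m u v = (\<Sum>k<m. (2 * real k + 1) / 2 * L k u * L k v)"

lemma CD: "(u - v) * KK (Suc n) u v = real (Suc n) / 2 * (L (Suc n) u * L n v - L n u * L (Suc n) v)"
proof (induction n)
  case 0
  then show ?case by (simp add: KK_def field_simps)
next
  case (Suc n)
  have Ru: "real (n+2) * L (Suc (Suc n)) u = real (2*n+3) * u * L (Suc n) u - real (n+1) * L n u" by (rule leg_rec)
  have Rv: "real (n+2) * L (Suc (Suc n)) v = real (2*n+3) * v * L (Suc n) v - real (n+1) * L n v" by (rule leg_rec)
  have "(u - v) * KK (Suc (Suc n)) u v = (u - v) * KK (Suc n) u v + (u - v) * ((2 * real (Suc n) + 1) / 2 * L (Suc n) u * L (Suc n) v)"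
    by (simp add: KK_def algebra_simps)
  also have "\<dots> = real (Suc n) / 2 * (L (Suc n) u * L n v - L n u * L (Suc n) v) + (u - v) * ((2 * real (Suc n) + 1) / 2 * L (Suc n) u * L (Suc n) v)"
    using Suc by simp
  also have "\<dots> = 1/2 * ((real (n+2) * L (Suc (Suc n)) u) * L (Suc n) v - L (Suc n) u * (real (n+2) * L (Suc (Suc n)) v))"
    unfolding Ru Rv by (simp add: field_simps del: legendre.simps)
  also have "\<dots> = real (Suc (Suc n)) / 2 * (L (Suc (Suc n)) u * L (Suc n) v - L (Suc n) u * L (Suc (Suc n)) v)"
    by (simp add: algebra_simps del: legendre.simps)
  finally show ?case .
qed

lemma CD_conf: "KK (Suc n) u u = real (Suc n) / 2 * (L' (Suc n) u * L n u - L' n u * L (Suc n) u)"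
proof (induction n)
  case 0
  then show ?case by (simp add: KK_def field_simps pderiv_pCons)
next
  case (Suc n)
  have Ru: "real (n+2) * L (Suc (Suc n)) u = real (2*n+3) * u * L (Suc n) u - real (n+1) * L n u" by (rule leg_rec)
  have Rd: "real (n+2) * L' (Suc (Suc n)) u = real (2*n+3) * L (Suc n) u + real (2*n+3) * u * L' (Suc n) u - real (n+1) * L' n u" by (rule leg_rec_d)
  have "KK (Suc (Suc n)) u u = KK (Suc n) u u + ((2 * real (Suc n) + 1) / 2 * L (Suc n) u * L (Suc n) u)"
    by (simp add: KK_def algebra_simps)
  also have "\<dots> = real (Suc n) / 2 * (L' (Suc n) u * L n u - L' n u * L (Suc n) u) + ((2 * real (Suc n) + 1) / 2 * L (Suc n) u * L (Suc n) u)"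
    using Suc by simp
  also have "\<dots> = 1/2 * ((real (n+2) * L' (Suc (Suc n)) u) * L (Suc n) u - L' (Suc n) u * (real (n+2) * L (Suc (Suc n)) u))"
    unfolding Ru Rd by (simp add: field_simps del: legendre.simps)
  also have "\<dots> = real (Suc (Suc n)) / 2 * (L' (Suc (Suc n)) u * L (Suc n) u - L' (Suc n) u * L (Suc (Suc n)) u)"
    by (simp add: algebra_simps del: legendre.simps)
  finally show ?case .
qed

lemma leg_one: "L n 1 = 1"
  by (induction n rule: legendre.induct) (simp_all add: field_simps)

lemma leg_mone: "L n (-1) = (-1) ^ n"
proof (induction n rule: legendre.induct)
  case (3 n)
  then show ?case by (simp add: field_simps)
qed simp_all

lemma leg_nocommon: "L n t = 0 \<Longrightarrow> L (Suc n) t = 0 \<Longrightarrow> False"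
proof (induction n)
  case 0
  then show ?case by simp
next
  case (Suc n)
  have "real (n+2) * L (Suc (Suc n)) t = real (2*n+3) * t * L (Suc n) t - real (n+1) * L n t" by (rule leg_rec)
  with Suc.prems have "L n t = 0" by simp
  with Suc show ?case by blast
qed

lemma leg_degree: "degree (legendre n) \<le> n"
proof (induction n rule: legendre.induct)
  case (3 n)
  have "degree ([:0, 1:] * legendre (Suc n)) \<le> Suc (Suc n)"
    using degree_mult_le[of "[:0,1:]" "legendre (Suc n)"] 3 by simp
  then have "degree (smult (real (2 * n + 3)) ([:0, 1:] * legendre (Suc n)) - smult (real (n + 1)) (legendre n)) \<le> Suc (Suc n)"
    using degree_diff_le[of "smult (real (2 * n + 3)) ([:0, 1:] * legendre (Suc n))" "Suc (Suc n)" "smult (real (n + 1)) (legendre n)"] 3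
    by (meson degree_smult_le le_SucI order.trans)
  then show ?case unfolding legendre.simps(3) using degree_smult_le order.trans by blast
qed simp_all

lemma leg_H: "(1 - t^2) * L' (Suc n) t = real (Suc n) * (L n t - t * L (Suc n) t)"
proof -
  have A: "L' (Suc n) t = t * L' n t + real (Suc n) * L n t" and B: "t * L' (Suc n) t - L' n t = real (Suc n) * L (Suc n) t"
    using leg_deriv[of n t] by auto
  have B': "L' n t = t * L' (Suc n) t - real (Suc n) * L (Suc n) t" using B by simp
  have "L' (Suc n) t = t * (t * L' (Suc n) t - real (Suc n) * L (Suc n) t) + real (Suc n) * L n t"
    using A unfolding B' .
  then show ?thesis by (simp add: algebra_simps power2_eq_square)
qed

lemma diag_alg:
  fixes a p p' r r' n :: real
  assumes h1: "n*r = ((2*n+1)*a + n+1)*p" and h2: "a*p' - r' = n*p" and h3: "(1-a)*p' = (n+1)*p" and h4: "a \<noteq> 1"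
  shows "n/2*(p'*r - r'*p) + (2*n+1)/2*p^2 = (n+1)^2*p^2/(1-a)"
proof -
  have r': "r' = a*p' - n*p" using h2 by simp
  have "n/2*(p'*r - r'*p) + (2*n+1)/2*p^2 = 1/2*(p'*(n*r) - n*a*p'*p + n*n*p*p) + (2*n+1)/2*p^2"
    unfolding r' by (simp add: algebra_simps power2_eq_square)
  also have "\<dots> = 1/2*(p*((1-a)*p')*((n+1)*(a+1)/(1-a)) + n*n*p*p) + (2*n+1)/2*p^2"
    unfolding h1 using h4 by (simp add: field_simps)
  also have "\<dots> = 1/2*(p*((n+1)*p)*((n+1)*(a+1)/(1-a)) + n*n*p*p) + (2*n+1)/2*p^2"
    unfolding h3 ..
  also have "\<dots> = (n+1)^2*p^2/(1-a)"
    using h4 by (simp add: field_simps power2_eq_square)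
  finally show ?thesis .
qed

lemma root_rel:
  assumes r: "L N a + L (Suc N) a = 0" and N: "N = Suc m"
  shows "real N * L m a = ((2*real N+1)*a + real N+1) * L N a"
proof -
  have R: "real (m+2) * L (Suc (Suc m)) a = real (2*m+3) * a * L (Suc m) a - real (m+1) * L m a" by (rule leg_rec)
  have "L (Suc (Suc m)) a = - L (Suc m) a" using r N by simp
  with R N show ?thesis by (simp add: algebra_simps del: legendre.simps)
qed

lemma K_minus:
  assumes r: "L N a + L (Suc N) a = 0" and N: "N = Suc m" and a: "a \<noteq> -1"
  shows "KK N (-1) a = -((-1)^N * (2*real N+1)/2 * L N a)"
proof -
  have cd: "(-1 - a) * KK N (-1) a = real N / 2 * (L N (-1) * L m a - L m (-1) * L N a)"
    using CD[where u="-1" and v=a and n=m] N by simp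
  have rr: "real N * L m a = ((2*real N+1)*a + real N+1) * L N a" by (rule root_rel[OF r N])
  have sg: "(-1::real)^m = -((-1)^N)" using N by simp
  have "real N / 2 * (L N (-1) * L m a - L m (-1) * L N a) = (-1)^N / 2 * (real N * L m a + real N * L N a)"
    unfolding leg_mone sg by (simp add: algebra_simps)
  also have "\<dots> = (-1 - a) * (-((-1)^N * (2*real N+1)/2 * L N a))"
    unfolding rr by (simp add: field_simps)
  finally have "(-1 - a) * KK N (-1) a = (-1 - a) * (-((-1)^N * (2*real N+1)/2 * L N a))"
    using cd by simp
  moreover have "-1 - a \<noteq> 0" using a by simp
  ultimately show ?thesis by (metis mult_cancel_left)
qed

lemma K_off:
  assumes ra: "L N a + L (Suc N) a = 0" and rb: "L N b + L (Suc N) b = 0" and N: "N = Suc m" and ab: "a \<noteq> b"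
  shows "KK N b a = -((2*real N+1)/2 * L N a * L N b)"
proof -
  have cd: "(b - a) * KK N b a = real N / 2 * (L N b * L m a - L m b * L N a)"
    using CD[where u=b and v=a and n=m] N by simp
  have rra: "real N * L m a = ((2*real N+1)*a + real N+1) * L N a" by (rule root_rel[OF ra N])
  have rrb: "real N * L m b = ((2*real N+1)*b + real N+1) * L N b" by (rule root_rel[OF rb N])
  have "real N / 2 * (L N b * L m a - L m b * L N a) = 1/2 * (L N b * (real N * L m a) - (real N * L m b) * L N a)"
    by (simp add: algebra_simps)
  also have "\<dots> = (b - a) * (-((2*real N+1)/2 * L N a * L N b))"
    unfolding rra rrb by (simp add: field_simps)
  finally have "(b - a) * KK N b a = (b - a) * (-((2*real N+1)/2 * L N a * L N b))"
    using cd by simp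
  moreover have "b - a \<noteq> 0" using ab by simp
  ultimately show ?thesis by (metis mult_cancel_left)
qed

lemma K_diag:
  assumes r: "L N a + L (Suc N) a = 0" and N: "N = Suc m" and a: "a \<noteq> -1" "a \<noteq> 1"
  shows "KK N a a + (2*real N+1)/2 * (L N a)^2 = (real N+1)^2 * (L N a)^2 / (1 - a)"
proof -
  have cc: "KK N a a = real N / 2 * (L' N a * L m a - L' m a * L N a)"
    using CD_conf[of m a] N by simp
  have h1: "real N * L m a = ((2*real N+1)*a + real N+1) * L N a" by (rule root_rel[OF r N])
  have h2: "a * L' N a - L' m a = real N * L N a" unfolding N by (rule conjunct2[OF leg_deriv])
  have H: "(1 - a^2) * L' N a = real N * (L m a - a * L N a)" using leg_H[of a m] N by simp
  have "(1 + a) * ((1 - a) * L' N a) = (1 + a) * ((real N + 1) * L N a)"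
  proof -
    have "(1 + a) * ((1 - a) * L' N a) = (1 - a^2) * L' N a" by (simp add: algebra_simps power2_eq_square)
    also have "\<dots> = real N * L m a - real N * a * L N a" unfolding H by (simp add: algebra_simps)
    also have "\<dots> = (1 + a) * ((real N + 1) * L N a)" unfolding h1 by (simp add: algebra_simps)
    finally show ?thesis .
  qed
  moreover have "1 + a \<noteq> 0" using a by simp
  ultimately have h3: "(1 - a) * L' N a = (real N + 1) * L N a" by simp
  show ?thesis unfolding cc by (rule diag_alg[OF h1 h2 h3 a(2)])
qed

lemma Q_eval:
  "(\<Sum>k<N. ((L k b - (-1)^(N+k) * L N b) * w) / lgr_gamma k * L k y)
    = w * (KK N b y - (-1)^N * L N b * KK N (-1) y)"
proof -
  have "(\<Sum>k<N. ((L k b - (-1)^(N+k) * L N b) * w) / lgr_gamma k * L k y)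
     = (\<Sum>k<N. w * ((2 * real k + 1) / 2 * L k b * L k y) - w * ((-1)^N * L N b) * ((2 * real k + 1) / 2 * L k (-1) * L k y))"
    by (rule sum.cong) (simp_all add: lgr_gamma_def leg_mone power_add field_simps del: legendre.simps)
  also have "\<dots> = w * (KK N b y - (-1)^N * L N b * KK N (-1) y)"
    unfolding KK_def sum_subtractf sum_distrib_left[symmetric] by (simp add: algebra_simps)
  finally show ?thesis .
qed

lemma eq_pts:
  fixes p q :: "real poly"
  assumes inj: "inj_on x {1..N}" and dp: "degree p < N" and dq: "degree q < N"
    and ag: "\<And>i. i \<in> {1..N} \<Longrightarrow> poly p (x i) = poly q (x i)"
  shows "p = q"
proof -
  have c: "card (x ` {1..N}) = N" using card_image[OF inj] by simp
  show ?thesis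
    by (rule poly_eqI_degree[where A="x ` {1..N}"]) (use ag c dp dq in auto)
qed

theorem proposition4p3:
  fixes N :: nat and x :: "nat \<Rightarrow> real" and B :: "nat \<Rightarrow> real poly"
  assumes N1: "N \<ge> 1"
    and x_inj: "inj_on x {0..N}"
    and x_roots: "x ` {0..N} = {t. poly (legendre N + legendre (Suc N)) t = 0}"
    and x0: "x 0 = -1"
    and B_deg: "\<forall>j\<in>{0..N}. degree (B j) \<le> N"
    and B0_left: "poly (B 0) (-1) = 1"
    and B0_der: "\<forall>i\<in>{1..N}. poly (pderiv (B 0)) (x i) = 0"
    and Bj_left: "\<forall>j\<in>{1..N}. poly (B j) (-1) = 0"
    and Bj_der: "\<forall>i\<in>{1..N}. \<forall>j\<in>{1..N}.
                   poly (pderiv (B j)) (x i) = (if i = j then 1 else 0)"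
  shows "B 0 = 1 \<and>
    (\<forall>j\<in>{1..N}. \<forall>t\<in>{-1..1}.
       poly (B j) t =
         (\<Sum>k<N. ((poly (legendre k) (x j) - (-1) ^ (N + k) * poly (legendre N) (x j))
                     * lgr_weight N (x j))
                  * antideriv (poly (legendre k)) t / lgr_gamma k))"
proof -
  obtain m where N: "N = Suc m" using N1 by (cases N) auto
  have inj1: "inj_on x {1..N}" using x_inj by (rule inj_on_subset) auto
  have root: "L N (x i) + L (Suc N) (x i) = 0" if "i \<in> {0..N}" for i
  proof -
    have "x i \<in> x ` {0..N}" using that by blast
    then show ?thesis unfolding x_roots by (simp add: poly_add del: legendre.simps)
  qed
  have ne_m1: "x i \<noteq> -1" if "i \<in> {1..N}" for i
  proof
    assume "x i = -1"
    then have "x i = x 0" using x0 by simp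
    moreover have "i \<in> {0..N}" "(0::nat) \<in> {0..N}" using that by auto
    ultimately have "i = 0" using x_inj by (meson inj_onD)
    with that show False by simp
  qed
  have ne_1: "x i \<noteq> 1" if "i \<in> {0..N}" for i
  proof
    assume "x i = 1"
    with root[OF that] show False by (simp add: leg_one del: legendre.simps)
  qed
  have p_ne: "L N (x i) \<noteq> 0" if "i \<in> {0..N}" for i
  proof
    assume h: "L N (x i) = 0"
    with root[OF that] have "L (Suc N) (x i) = 0" by simp
    with h show False by (rule leg_nocommon)
  qed
  have degpd: "degree (pderiv (B j)) < N" if "j \<in> {0..N}" for j
  proof -
    have "degree (B j) \<le> N" using B_deg that by blast
    then show ?thesis using N1 unfolding degree_pderiv by linarith
  qed
  have "pderiv (B 0) = 0"
    by (rule eq_pts[OF inj1]) (use degpd[of 0] B0_der N1 in auto)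
  then have d0: "degree (B 0) = 0" by (simp add: pderiv_eq_0_iff)
  then have "B 0 = [:coeff (B 0) 0:]" by (simp add: degree_0_id)
  moreover have "coeff (B 0) 0 = 1" using B0_left d0 by (metis \<open>B 0 = [:coeff (B 0) 0:]\<close> poly_pCons poly_0 mult_zero_right add_0_right)
  ultimately have B0: "B 0 = 1" by (simp add: one_pCons)
  have Bj: "poly (B j) t =
         (\<Sum>k<N. ((L k (x j) - (-1) ^ (N + k) * L N (x j)) * lgr_weight N (x j))
                  * antideriv (poly (legendre k)) t / lgr_gamma k)"
    if j: "j \<in> {1..N}" and t: "t \<in> {-1..1}" for j t
  proof -
    define w where "w = lgr_weight N (x j)"
    define c where "c k = ((L k (x j) - (-1) ^ (N + k) * L N (x j)) * w) / lgr_gamma k" for k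
    define Q where "Q = (\<Sum>k<N. smult (c k) (legendre k))"
    have polyQ: "poly Q y = (\<Sum>k<N. c k * L k y)" for y
      unfolding Q_def by (simp add: poly_sum del: legendre.simps)
    have Qv: "poly Q y = w * (KK N (x j) y - (-1)^N * L N (x j) * KK N (-1) y)" for y
      unfolding polyQ c_def by (rule Q_eval)
    have j0: "j \<in> {0..N}" using j by auto
    have Qx: "poly Q (x i) = (if i = j then 1 else 0)" if i: "i \<in> {1..N}" for i
    proof -
      have i0: "i \<in> {0..N}" using i by auto
      have Km: "KK N (-1) (x i) = -((-1)^N * (2*real N+1)/2 * L N (x i))"
        by (rule K_minus[OF root[OF i0] N ne_m1[OF i]])
      show ?thesis
      proof (cases "i = j")
        case True
        have Kd: "KK N (x j) (x j) + (2*real N+1)/2 * (L N (x j))^2 = (real N+1)^2 * (L N (x j))^2 / (1 - x j)"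
          by (rule K_diag[OF root[OF j0] N ne_m1[OF j] ne_1[OF j0]])
        have Kmj: "KK N (-1) (x j) = -((-1)^N * (2*real N+1)/2 * L N (x j))" using Km True by simp
        have "poly Q (x j) = w * (KK N (x j) (x j) + (2*real N+1)/2 * (L N (x j))^2)"
          unfolding Qv Kmj by (simp add: algebra_simps power2_eq_square del: legendre.simps)
        also have "\<dots> = 1"
          unfolding Kd w_def lgr_weight_def using p_ne[OF j0] ne_1[OF j0]
          by (simp add: field_simps del: legendre.simps)
        finally show ?thesis using True by simp
      next
        case False
        have xne: "x i \<noteq> x j" using False x_inj i0 j0 by (meson inj_onD)
        have Ko: "KK N (x j) (x i) = -((2*real N+1)/2 * L N (x i) * L N (x j))"
          by (rule K_off[OF root[OF i0] root[OF j0] N xne])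
        have "poly Q (x i) = 0"
          unfolding Qv Km Ko by (simp add: algebra_simps del: legendre.simps)
        then show ?thesis using False by simp
      qed
    qed
    have degQ: "degree Q < N"
    proof -
      have "degree Q \<le> m"
        unfolding Q_def
      proof (rule degree_sum_le)
        fix k assume "k \<in> {..<N}"
        then have "k \<le> m" using N by auto
        then show "degree (smult (c k) (legendre k)) \<le> m"
          using leg_degree[of k] degree_smult_le[of "c k" "legendre k"] by linarith
      qed simp
      then show ?thesis using N by simp
    qed
    have PQ: "pderiv (B j) = Q"
      by (rule eq_pts[OF inj1 degpd[OF j0] degQ]) (use Qx Bj_der j in auto)
    have tt: "-1 \<le> t" using t by auto
    have ftc: "((\<lambda>s. poly (pderiv (B j)) s) has_integral (poly (B j) t - poly (B j) (-1))) {-1..t}"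
      by (rule fundamental_theorem_of_calculus[OF tt])
         (auto simp: has_real_derivative_iff_has_vector_derivative[symmetric] intro: has_field_derivative_at_within)
    have "poly (B j) t = integral {-1..t} (\<lambda>s. poly Q s)"
      using integral_unique[OF ftc] Bj_left j unfolding PQ by simp
    also have "\<dots> = integral {-1..t} (\<lambda>s. \<Sum>k<N. c k * L k s)"
      unfolding polyQ ..
    also have "\<dots> = (\<Sum>k<N. integral {-1..t} (\<lambda>s. c k * L k s))"
      by (rule integral_sum) (auto intro!: integrable_continuous_interval continuous_intros simp del: legendre.simps)
    also have "\<dots> = (\<Sum>k<N. c k * antideriv (poly (legendre k)) t)"
      by (simp add: antideriv_def del: legendre.simps)
    also have "\<dots> = (\<Sum>k<N. ((L k (x j) - (-1) ^ (N + k) * L N (x j)) * lgr_weight N (x j))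
                  * antideriv (poly (legendre k)) t / lgr_gamma k)"
      unfolding c_def w_def by (simp del: legendre.simps)
    finally show ?thesis .
  qed
  show ?thesis using B0 Bj by blast
qed

end
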